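(* For every positive integer $r$, $$\sum_{n=1}^{\infty}\frac{1}{n(2n+2r-1)4^n}\frac{\binom{4n-2}{2n-1}}{\binom{2n+2r-2}{n+r-1}}=\frac{1}{(2r-1)\binom{2r-2}{r-1}}-\frac{1}{2^{2r-2}}I(r),$$ where $$I(r)=\frac{6\cdot 16^{r-1}}{r\binom{4r}{2r}}\left(\frac{4}{3}-\sqrt{2}\sum_{k=0}^{r-1} \frac{\binom{4k}{2k}}{(6k+3)16^k}\right).$$ *)

theory Defs
  imports Complex_Main
begin

definition I_r :: "nat \<Rightarrow> real" where
  "I_r r = 6 * 16 ^ (r - 1) / (real r * real ((4*r) choose (2*r))) *
     (4/3 - sqrt 2 * (\<Sum>k=0..r-1. real ((4*k) choose (2*k)) / ((6 * real k + 3) * 16 ^ k)))"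

end

theory Submission
  imports Defs
begin

definition cc :: "nat \<Rightarrow> real" where "cc m = real ((2*m) choose m) / 4^m"

lemma central_rec: "real ((2*m+2) choose (m+1)) = real ((2*m) choose m) * (2*(2*real m+1)) / (real m+1)"
proof -
  have h1: "Suc (Suc (2*m)) * (Suc (2*m) choose m) = (Suc (Suc (2*m)) choose Suc m) * Suc m"
    by (rule Suc_times_binomial_eq)
  have h2: "Suc m * (Suc (2*m) choose m) = Suc (2*m) * (2*m choose m)"
    using binomial_absorb_comp[of "Suc (2*m)" m] by (simp add: Suc_diff_le)
  have e: "2*m+2 = Suc (Suc (2*m))" "m+1 = Suc m" by simp_all
  define R where "R = real (Suc (Suc (2*m)) choose Suc m)"
  define B where "B = real (Suc (2*m) choose m)"
  define C where "C = real (2*m choose m)"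
  have r1: "(2*real m+2) * B = R * (real m+1)"
    using arg_cong[OF h1, of real] unfolding R_def B_def of_nat_mult by (simp del: binomial_Suc_Suc add: algebra_simps)
  have r2: "(real m+1) * B = (2*real m+1) * C"
    using arg_cong[OF h2, of real] unfolding C_def B_def of_nat_mult by (simp del: binomial_Suc_Suc add: algebra_simps)
  have "R = (2*real m+2) * B / (real m+1)" using r1 by (simp add: field_simps)
  also have "\<dots> = 2 * ((real m+1) * B) / (real m+1)" by (simp add: algebra_simps)
  also have "\<dots> = 2 * ((2*real m+1) * C) / (real m+1)" by (simp only: r2)
  finally show ?thesis unfolding e R_def[symmetric] C_def[symmetric] by (simp add: algebra_simps)
qed

lemma cc_pos: "cc m > 0" unfolding cc_def by simp

lemma choose_cc: "real ((2*m) choose m) = cc m * 4^m"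
  unfolding cc_def by simp

lemma cc_rec: "cc (m+1) = cc m * (2*real m+1) / (2*real m+2)"
proof -
  have e: "2*(m+1) = 2*m+2" by simp
  have "cc (m+1) = real ((2*m+2) choose (m+1)) / 4^(m+1)" unfolding cc_def e ..
  also have "\<dots> = real ((2*m) choose m) * (2*(2*real m+1)) / (real m+1) / 4^(m+1)"
    by (simp only: central_rec)
  also have "\<dots> = cc m * (2*real m+1) / (2*real m+2)"
    unfolding choose_cc by (simp add: divide_simps ; simp add: algebra_simps)
  finally show ?thesis .
qed

lemma cc2: "cc (2*k+3) = cc (2*k+1) * (4*real k+3)*(4*real k+5)/((4*real k+4)*(4*real k+6))"
proof -
  have "cc (2*k+3) = cc ((2*k+1)+1+1)" by (simp add: numeral_3_eq_3)
  also have "\<dots> = cc (2*k+1) * (2*real (2*k+1)+1) / (2*real (2*k+1)+2) * (2*real (2*k+1+1)+1) / (2*real (2*k+1+1)+2)"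
    by (simp only: cc_rec)
  also have "\<dots> = cc (2*k+1) * (4*real k+3)*(4*real k+5)/((4*real k+4)*(4*real k+6))"
    by (simp add: divide_simps ; simp add: algebra_simps)
  finally show ?thesis .
qed

definition A :: "nat \<Rightarrow> nat \<Rightarrow> real" where
  "A r n = 1 / (real n * (2 * real n + 2 * real r - 1) * 4 ^ n) *
            (real ((4*n - 2) choose (2*n - 1)) / real ((2*n + 2*r - 2) choose (n + r - 1)))"

lemma A_cc: "A (Suc q) (Suc k) = cc (2*k+1) / (4^(Suc q) * (real k + 1) * (2*real k + 2*real q + 3) * cc (k+q+1))"
proof -
  have e1: "4 * Suc k - 2 = 2*(2*k+1)" and e2: "2 * Suc k - 1 = 2*k+1"
    and e3: "2 * Suc k + 2 * Suc q - 2 = 2*(k+q+1)" and e4: "Suc k + Suc q - 1 = k+q+1" by simp_all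
  have p: "(4::real)^(2*k+1) = 4^(Suc k) * 4^(k+q+1) / 4^(Suc q)"
  proof -
    have "(4::real)^(2*k+1) * 4^(Suc q) = 4^(Suc k) * 4^(k+q+1)"
      by (simp add: power_add[symmetric])
    then show ?thesis by (simp add: field_simps)
  qed
  have "A (Suc q) (Suc k) = 1 / (real (Suc k) * (2 * real (Suc k) + 2 * real (Suc q) - 1) * 4 ^ (Suc k)) *
            (real ((2*(2*k+1)) choose (2*k+1)) / real ((2*(k+q+1)) choose (k+q+1)))"
    unfolding A_def e1 e2 e3 e4 ..
  also have "\<dots> = 1 / (real (Suc k) * (2 * real (Suc k) + 2 * real (Suc q) - 1) * 4 ^ (Suc k)) *
            (cc (2*k+1) * (4^(Suc k) * 4^(k+q+1) / 4^(Suc q)) / (cc (k+q+1) * 4^(k+q+1)))"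
    unfolding choose_cc p ..
  also have "\<dots> = cc (2*k+1) / (4^(Suc q) * (real k + 1) * (2*real k + 2*real q + 3) * cc (k+q+1))"
    using cc_pos[of "k+q+1"] by (simp add: divide_simps ; simp add: algebra_simps)
  finally show ?thesis .
qed

definition mu :: "nat \<Rightarrow> real" where
  "mu q = (4*real q+7)*(4*real q+5)/((2*real q+2)*(2*real q+3))"

definition G :: "nat \<Rightarrow> nat \<Rightarrow> real" where
  "G q n = -(real n)*(2*real n - 1) * A (Suc q) n / ((real q+1)*(2*real q+3))"

lemma tele_alg: fixes X Y p x y :: real assumes "0<X" "0<Y" "0<p" "0\<le>x" "0\<le>y"
  shows "X / (4*p * (x + 1) * (2*x + 2*y + 3) * Y)
   - (4*y+7)*(4*y+5)/((2*y+2)*(2*y+3)) * (X / (16*p * (x + 1) * (2*x + 2*y + 5) * (Y * (2*x+2*y+3)/(2*x+2*y+4))))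
   = -(x+2)*(2*(x+2)-1) * ((X * (4*x+3)*(4*x+5)/((4*x+4)*(4*x+6))) /
       (4*p * (x + 2) * (2*x + 2*y + 5) * (Y * (2*x+2*y+3)/(2*x+2*y+4)))) / ((y+1)*(2*y+3))
     - (-(x+1)*(2*(x+1)-1) * (X / (4*p * (x + 1) * (2*x + 2*y + 3) * Y)) / ((y+1)*(2*y+3)))"
proof -
  define Q where "Q = X / (4*p*Y*(2*x+2*y+3)*(y+1)*(2*y+3)*8*(x+1)*(2*x+2*y+5))"
  have t1: "X / (4*p * (x + 1) * (2*x + 2*y + 3) * Y) = Q * (8*(y+1)*(2*y+3)*(2*x+2*y+5))"
    unfolding Q_def using assms by (simp add: divide_simps ; simp add: algebra_simps)
  have t2: "(4*y+7)*(4*y+5)/((2*y+2)*(2*y+3)) * (X / (16*p * (x + 1) * (2*x + 2*y + 5) * (Y * (2*x+2*y+3)/(2*x+2*y+4))))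
     = Q * ((4*y+7)*(4*y+5)*(2*x+2*y+4))"
    unfolding Q_def using assms by (simp add: divide_simps ; simp add: algebra_simps)
  have t3: "-(x+2)*(2*(x+2)-1) * ((X * (4*x+3)*(4*x+5)/((4*x+4)*(4*x+6))) /
       (4*p * (x + 2) * (2*x + 2*y + 5) * (Y * (2*x+2*y+3)/(2*x+2*y+4)))) / ((y+1)*(2*y+3))
     = - Q * ((4*x+3)*(4*x+5)*(2*x+2*y+4))"
    unfolding Q_def using assms by (simp add: divide_simps ; simp add: algebra_simps)
  have t4: "-(x+1)*(2*(x+1)-1) * (Q * (8*(y+1)*(2*y+3)*(2*x+2*y+5))) / ((y+1)*(2*y+3))
     = - Q * (8*(2*x+1)*(x+1)*(2*x+2*y+5))"
    unfolding Q_def using assms by (simp add: divide_simps ; simp add: algebra_simps)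
  have poly: "8*(y+1)*(2*y+3)*(2*x+2*y+5) - (4*y+7)*(4*y+5)*(2*x+2*y+4)
     = - ((4*x+3)*(4*x+5)*(2*x+2*y+4)) + (8*(2*x+1)*(x+1)*(2*x+2*y+5))"
    by (simp add: algebra_simps)
  have "Q * (8*(y+1)*(2*y+3)*(2*x+2*y+5)) - Q * ((4*y+7)*(4*y+5)*(2*x+2*y+4))
      = Q * (8*(y+1)*(2*y+3)*(2*x+2*y+5) - (4*y+7)*(4*y+5)*(2*x+2*y+4))"
    by (simp only: right_diff_distrib)
  also have "\<dots> = Q * (- ((4*x+3)*(4*x+5)*(2*x+2*y+4)) + (8*(2*x+1)*(x+1)*(2*x+2*y+5)))"
    by (simp only: poly)
  also have "\<dots> = - Q * ((4*x+3)*(4*x+5)*(2*x+2*y+4)) - (- Q * (8*(2*x+1)*(x+1)*(2*x+2*y+5)))"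
    by (simp only: distrib_left mult_minus_left mult_minus_right diff_minus_eq_add)
  finally show ?thesis unfolding t1 t2 t3 t4 .
qed
lemma tele: "A (Suc q) (Suc k) - mu q * A (Suc (Suc q)) (Suc k) = G q (Suc (Suc k)) - G q (Suc k)"
proof -
  define X where "X = cc (2*k+1)"
  define Y where "Y = cc (k+q+1)"
  define p where "p = (4::real)^q"
  define x where "x = real k"
  define y where "y = real q"
  have X: "X > 0" and Y: "Y > 0" and p: "p > 0" using cc_pos by (auto simp: X_def Y_def p_def)
  have x0: "x \<ge> 0" and y0: "y \<ge> 0" by (simp_all add: x_def y_def)
  have a1: "A (Suc q) (Suc k) = X / (4*p * (x + 1) * (2*x + 2*y + 3) * Y)"
    unfolding A_cc X_def Y_def p_def x_def y_def by simp
  have yy: "cc (k+Suc q+1) = Y * (2*x+2*y+3)/(2*x+2*y+4)"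
  proof -
    have "cc (k+Suc q+1) = cc ((k+q+1)+1)" by simp
    also have "\<dots> = Y * (2*real (k+q+1)+1)/(2*real (k+q+1)+2)" unfolding Y_def by (rule cc_rec)
    finally show ?thesis by (simp add: algebra_simps x_def y_def)
  qed
  have yy2: "cc (Suc k+q+1) = Y * (2*x+2*y+3)/(2*x+2*y+4)"
    using yy by simp
  have a2: "A (Suc (Suc q)) (Suc k) = X / (16*p * (x + 1) * (2*x + 2*y + 5) * (Y * (2*x+2*y+3)/(2*x+2*y+4)))"
    unfolding A_cc X_def p_def yy by (simp add: algebra_simps x_def y_def)
  have xx: "cc (2*Suc k+1) = X * (4*x+3)*(4*x+5)/((4*x+4)*(4*x+6))"
  proof -
    have "2*Suc k+1 = 2*k+3" by simp
    then show ?thesis unfolding X_def x_def using cc2[of k] by (simp only:)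
  qed
  have a3: "A (Suc q) (Suc (Suc k)) = (X * (4*x+3)*(4*x+5)/((4*x+4)*(4*x+6))) /
       (4*p * (x + 2) * (2*x + 2*y + 5) * (Y * (2*x+2*y+3)/(2*x+2*y+4)))"
    unfolding A_cc[of q "Suc k"] xx yy2 p_def by (simp add: algebra_simps x_def y_def)
  have g2: "G q (Suc (Suc k)) = -(x+2)*(2*(x+2)-1) * A (Suc q) (Suc (Suc k)) / ((y+1)*(2*y+3))"
    unfolding G_def x_def y_def by (simp add: algebra_simps)
  have g1: "G q (Suc k) = -(x+1)*(2*(x+1)-1) * A (Suc q) (Suc k) / ((y+1)*(2*y+3))"
    unfolding G_def x_def y_def by (simp add: algebra_simps)
  have m: "mu q = (4*y+7)*(4*y+5)/((2*y+2)*(2*y+3))" unfolding mu_def y_def ..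
  show ?thesis unfolding g1 g2 m a1 a2 a3 by (rule tele_alg[OF X Y p x0 y0])
qed

definition yy :: "nat \<Rightarrow> real" where "yy m = (real m + 1/2) * (cc m)^2"

lemma cc_Suc: "cc (Suc m) = cc m * (2*real m+1) / (2*real m+2)"
  using cc_rec[of m] by simp

lemma cc0: "cc 0 = 1" unfolding cc_def by simp
lemma cc1: "cc 1 = 1/2" using cc_Suc[of 0] cc0 by simp

lemma yy_rec: "yy (Suc m) = yy m * ((2*real m+3)*(2*real m+1)/((2*real m+2)^2))"
  unfolding yy_def cc_Suc using cc_pos[of m]
  by (simp add: divide_simps power2_eq_square ; simp add: algebra_simps)

lemma yy_nonneg: "yy m \<ge> 0" unfolding yy_def by simp

lemma yy_dec: "decseq yy"
proof (rule decseq_SucI)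
  fix m
  have a: "(2*real m+3)*(2*real m+1) \<le> (2*real m+2)^2" by (simp add: power2_eq_square algebra_simps)
  have b: "(2*real m+3)*(2*real m+1)/((2*real m+2)^2) \<le> 1"
    using a by (simp add: pos_divide_le_eq)
  show "yy (Suc m) \<le> yy m" unfolding yy_rec using mult_left_le[OF b yy_nonneg[of m]] .
qed

lemma xx_ge: "real (Suc m) * cc (Suc m)^2 \<ge> 1/4"
proof (induction m)
  case 0
  have h: "cc (Suc 0) = 1/2" using cc1 by simp
  show ?case by (simp add: h power2_eq_square)
next
  case (Suc m)
  define c where "c = cc (Suc m)"
  have c: "c > 0" using cc_pos c_def by simp
  have e: "real (Suc (Suc m)) * cc (Suc (Suc m))^2 = (real (Suc m) * c^2) * ((real m+2)*(2*real m+3)^2/((real m+1)*(2*real m+4)^2))"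
    unfolding cc_Suc[of "Suc m"] c_def[symmetric] using c
    by (simp add: divide_simps power2_eq_square ; simp add: algebra_simps)
  have f: "(real m+2)*(2*real m+3)^2/((real m+1)*(2*real m+4)^2) \<ge> 1"
  proof -
    have a: "1 * ((real m+1)*(2*real m+4)^2) \<le> (real m+2)*(2*real m+3)^2" by (simp add: power2_eq_square algebra_simps)
    have pos: "(real m+1)*(2*real m+4)^2 > 0" by simp
    show ?thesis by (subst pos_le_divide_eq[OF pos]) (rule a)
  qed
  have "real (Suc m) * c^2 \<ge> 1/4" using Suc.IH c_def by simp
  then have "(real (Suc m) * c^2) * ((real m+2)*(2*real m+3)^2/((real m+1)*(2*real m+4)^2)) \<ge> 1/4 * 1"
    using f by (intro mult_mono) auto
  then show ?case unfolding e by simp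
qed

lemma yy_ge: "yy m \<ge> 1/4"
proof (cases m)
  case 0
  then show ?thesis unfolding yy_def using cc0 by simp
next
  case (Suc j)
  have "yy m = real (Suc j) * cc (Suc j)^2 + cc (Suc j)^2/2" unfolding yy_def Suc by (simp add: algebra_simps)
  moreover have "cc (Suc j)^2/2 \<ge> 0" by simp
  ultimately show ?thesis using xx_ge[of j] by linarith
qed

lemma lim_lin:
  fixes a b c d :: real
  assumes c: "c > 0" and d: "d > 0"
  shows "(\<lambda>k. (a*real k+b)/(c*real k+d)) \<longlonglongrightarrow> a/c"
proof -
  have g: "filterlim (\<lambda>k. c*real k + d) at_top sequentially"
  proof -
    have "filterlim (\<lambda>k. c*real k) at_top sequentially"
      using filterlim_tendsto_pos_mult_at_top[OF tendsto_const c filterlim_real_sequentially] .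
    from filterlim_tendsto_add_at_top[OF tendsto_const[of d] this]
    show ?thesis by (simp add: add.commute)
  qed
  have z: "(\<lambda>k. (b - a*d/c)/(c*real k+d)) \<longlonglongrightarrow> 0"
    by (rule real_tendsto_divide_at_top[OF tendsto_const g])
  have "(\<lambda>k. a/c + (b - a*d/c)/(c*real k+d)) \<longlonglongrightarrow> a/c + 0"
    by (rule tendsto_add[OF tendsto_const z])
  moreover have "(\<lambda>k. a/c + (b - a*d/c)/(c*real k+d)) = (\<lambda>k. (a*real k+b)/(c*real k+d))"
  proof
    fix k
    have "c*real k + d > 0" using c d by (simp add: add_nonneg_pos)
    then show "a/c + (b - a*d/c)/(c*real k+d) = (a*real k+b)/(c*real k+d)"
      using c by (simp add: divide_simps ; simp add: algebra_simps)
  qed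
  ultimately show ?thesis by simp
qed

lemma lim_ratio: "(\<lambda>k. cc (2*k+1) / cc (k+s)) \<longlonglongrightarrow> sqrt (1/2)"
proof -
  obtain L where L: "yy \<longlonglongrightarrow> L" "\<forall>i. L \<le> yy i"
    using decseq_convergent[OF yy_dec, of 0] yy_nonneg by blast
  have L4: "L \<ge> 1/4" using LIMSEQ_le_const[OF L(1), of "1/4"] yy_ge by blast
  have sm: "strict_mono (\<lambda>k::nat. 2*k+1)" by (rule strict_monoI) simp
  have l1: "(\<lambda>k. yy (2*k+1)) \<longlonglongrightarrow> L"
    using LIMSEQ_subseq_LIMSEQ[OF L(1) sm] by (simp add: o_def)
  have l2: "(\<lambda>k. yy (k+s)) \<longlonglongrightarrow> L" by (rule LIMSEQ_ignore_initial_segment[OF L(1)])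
  have l3: "(\<lambda>k. (1*real k + (real s + 1/2))/(2*real k + 3/2)) \<longlonglongrightarrow> 1/2"
    using lim_lin[of 2 "3/2" 1 "real s + 1/2"] by simp
  have L0: "L \<noteq> 0" using L4 by auto
  have l4: "(\<lambda>k. yy (2*k+1) / yy (k+s) * ((1*real k + (real s + 1/2))/(2*real k + 3/2))) \<longlonglongrightarrow> L / L * (1/2)"
    by (intro tendsto_mult tendsto_divide l1 l2 l3 L0)
  have eq: "yy (2*k+1) / yy (k+s) * ((1*real k + (real s + 1/2))/(2*real k + 3/2)) = (cc (2*k+1) / cc (k+s))^2" for k
    unfolding yy_def using cc_pos[of "2*k+1"] cc_pos[of "k+s"]
    by (simp add: divide_simps power2_eq_square ; simp add: algebra_simps)
  have sq: "(\<lambda>k. (cc (2*k+1) / cc (k+s))^2) \<longlonglongrightarrow> 1/2"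
    using l4 L0 unfolding eq by simp
  have "(\<lambda>k. sqrt ((cc (2*k+1) / cc (k+s))^2)) \<longlonglongrightarrow> sqrt (1/2)"
    by (rule tendsto_real_sqrt[OF sq])
  moreover have "sqrt ((cc (2*k+1) / cc (k+s))^2) = cc (2*k+1) / cc (k+s)" for k
    using cc_pos[of "2*k+1"] cc_pos[of "k+s"] by simp
  ultimately show ?thesis by simp
qed

definition G0 :: "nat \<Rightarrow> real" where
  "G0 k = (2*real k+1)/(3*real k+3) * (cc (2*k+1) / cc (k+1))"

lemma base_alg:
  fixes X Y x :: real assumes "X > 0" "Y > 0" "x \<ge> 0"
  shows "X / (4 * (x+1) * (2*x+3) * Y) =
     (2*x+3)/(3*x+6) * ((X*(4*x+3)*(4*x+5)/((4*x+4)*(4*x+6))) / (Y*(2*x+3)/(2*x+4))) - (2*x+1)/(3*x+3)*(X/Y)"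
  using assms by (simp add: divide_simps ; simp add: algebra_simps)

lemma base_tele: "A 1 (Suc k) = G0 (Suc k) - G0 k"
proof -
  define X where "X = cc (2*k+1)"
  define Y where "Y = cc (k+1)"
  define x where "x = real k"
  have X: "X > 0" and Y: "Y > 0" using cc_pos by (auto simp: X_def Y_def)
  have x0: "x \<ge> 0" by (simp add: x_def)
  have a: "A 1 (Suc k) = X / (4 * (x+1) * (2*x+3) * Y)"
    using A_cc[of 0 k] unfolding X_def Y_def x_def by simp
  have xx: "cc (2*Suc k+1) = X * (4*x+3)*(4*x+5)/((4*x+4)*(4*x+6))"
  proof -
    have "2*Suc k+1 = 2*k+3" by simp
    then show ?thesis unfolding X_def x_def using cc2[of k] by (simp only:)
  qed
  have yy: "cc (Suc k+1) = Y*(2*x+3)/(2*x+4)"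
    using cc_rec[of "k+1"] unfolding Y_def x_def by (simp add: algebra_simps)
  have g1: "G0 (Suc k) = (2*x+3)/(3*x+6) * ((X*(4*x+3)*(4*x+5)/((4*x+4)*(4*x+6))) / (Y*(2*x+3)/(2*x+4)))"
    unfolding G0_def xx yy by (simp add: x_def algebra_simps)
  have g0: "G0 k = (2*x+1)/(3*x+3)*(X/Y)"
    unfolding G0_def X_def Y_def x_def ..
  show ?thesis unfolding a g1 g0 by (rule base_alg[OF X Y x0])
qed

lemma sqrt_half: "sqrt (1/2) = sqrt 2 / 2"
proof -
  have "sqrt (1/2) = 1 / sqrt 2" by (simp add: real_sqrt_divide)
  also have "\<dots> = sqrt 2 / 2" by (simp add: divide_simps)
  finally show ?thesis .
qed

lemma G0_lim: "G0 \<longlonglongrightarrow> 2/3 * sqrt (1/2)"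
proof -
  have "(\<lambda>k. (2*real k+1)/(3*real k+3) * (cc (2*k+1) / cc (k+1))) \<longlonglongrightarrow> 2/3 * sqrt (1/2)"
    by (intro tendsto_mult lim_lin lim_ratio) simp_all
  then show ?thesis unfolding G0_def[abs_def] .
qed

lemma base_sums: "(\<lambda>m. A 1 (m+1)) sums (sqrt 2 / 3 - 1/3)"
proof -
  have "(\<lambda>n. G0 (Suc n) - G0 n) sums (2/3 * sqrt (1/2) - G0 0)"
    by (rule telescope_sums[OF G0_lim])
  moreover have "G0 0 = 1/3" unfolding G0_def using cc_pos[of 1] by simp
  ultimately show ?thesis unfolding base_tele[symmetric] sqrt_half by simp
qed

lemma G_lim: "(\<lambda>k. G q (Suc k)) \<longlonglongrightarrow> - sqrt (1/2) / (4^(Suc q)*(real q+1)*(2*real q+3))"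
proof -
  have eq: "G q (Suc k) = - ((2*real k+1)/(2*real k+(2*real q+3)) * (cc (2*k+1) / cc (k+(q+1)))) / (4^(Suc q)*(real q+1)*(2*real q+3))" for k
    unfolding G_def A_cc using cc_pos[of "2*k+1"] cc_pos[of "k+q+1"]
    by (simp add: divide_simps ; simp add: algebra_simps)
  have "(\<lambda>k. - ((2*real k+1)/(2*real k+(2*real q+3)) * (cc (2*k+1) / cc (k+(q+1)))) / (4^(Suc q)*(real q+1)*(2*real q+3)))
     \<longlonglongrightarrow> - (2/2 * sqrt (1/2)) / (4^(Suc q)*(real q+1)*(2*real q+3))"
    by (intro tendsto_divide tendsto_minus tendsto_mult lim_lin lim_ratio tendsto_const) simp_all
  then show ?thesis unfolding eq by simp
qed

lemma step_sums:
  assumes "(\<lambda>m. A (Suc q) (m+1)) sums S"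
  shows "(\<lambda>m. A (Suc (Suc q)) (m+1)) sums
     ((S - (- sqrt (1/2) / (4^(Suc q)*(real q+1)*(2*real q+3)) - G q (Suc 0))) / mu q)"
proof -
  have t: "(\<lambda>k. G q (Suc (Suc k)) - G q (Suc k)) sums
      (- sqrt (1/2) / (4^(Suc q)*(real q+1)*(2*real q+3)) - G q (Suc 0))"
    using telescope_sums[OF G_lim[of q]] .
  have t2: "(\<lambda>k. A (Suc q) (k+1) - mu q * A (Suc (Suc q)) (k+1)) sums
      (- sqrt (1/2) / (4^(Suc q)*(real q+1)*(2*real q+3)) - G q (Suc 0))"
    using t unfolding tele[symmetric] by simp
  have "(\<lambda>k. A (Suc q) (k+1) - (A (Suc q) (k+1) - mu q * A (Suc (Suc q)) (k+1))) sums
     (S - (- sqrt (1/2) / (4^(Suc q)*(real q+1)*(2*real q+3)) - G q (Suc 0)))"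
    by (rule sums_diff[OF assms t2])
  then have "(\<lambda>k. mu q * A (Suc (Suc q)) (k+1) / mu q) sums
     ((S - (- sqrt (1/2) / (4^(Suc q)*(real q+1)*(2*real q+3)) - G q (Suc 0))) / mu q)"
    by (intro sums_divide) simp
  moreover have "mu q \<noteq> 0" unfolding mu_def by (simp add: add_pos_pos)
  ultimately show ?thesis by simp
qed

definition Rr :: "nat \<Rightarrow> real" where
  "Rr r = 1 / ((2 * real r - 1) * real ((2*r - 2) choose (r - 1))) - 1 / 2 ^ (2*r - 2) * I_r r"

definition TT :: "nat \<Rightarrow> real" where
  "TT q = (\<Sum>k=0..q. real ((4*k) choose (2*k)) / ((6 * real k + 3) * 16 ^ k))"

lemma c1: "real ((4 * Suc q) choose (2 * Suc q)) = cc (2*q+2) * (16*4^q*4^q)"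
proof -
  have e: "4 * Suc q = 2*(2*q+2)" "2 * Suc q = 2*q+2" by simp_all
  have "real ((4 * Suc q) choose (2 * Suc q)) = cc (2*q+2) * 4^(2*q+2)"
    unfolding e by (rule choose_cc)
  also have "(4::real)^(2*q+2) = 16*4^q*4^q" by (simp add: power_add power_mult_distrib mult_2)
  finally show ?thesis .
qed

lemma R_form: "Rr (Suc q) = 1/((2*real q+1)*cc q*4^q) - 6/(16*4^q*(real q+1)*cc (2*q+2))*(4/3 - sqrt 2 * TT q)"
proof -
  have c2: "real ((2 * Suc q - 2) choose q) = cc q * 4^q"
  proof -
    have e: "2 * Suc q - 2 = 2*q" by simp_all
    show ?thesis unfolding e by (rule choose_cc)
  qed
  have p1: "(2::real)^(2*Suc q - 2) = 4^q" by (simp add: power_mult)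
  have p2: "(16::real)^q = 4^q*4^q" by (simp add: power_mult_distrib[symmetric])
  have e3: "Suc q - 1 = q" by simp
  have "Rr (Suc q) = 1 / ((2 * real (Suc q) - 1) * (cc q * 4^q)) - 1 / 4^q *
     (6 * (4^q*4^q) / (real (Suc q) * (cc (2*q+2) * (16*4^q*4^q))) * (4/3 - sqrt 2 * TT q))"
    unfolding Rr_def I_r_def c1 c2 p1 p2 e3 TT_def ..
  also have "\<dots> = 1/((2*real q+1)*cc q*4^q) - 6/(16*4^q*(real q+1)*cc (2*q+2))*(4/3 - sqrt 2 * TT q)"
    using cc_pos[of q] cc_pos[of "2*q+2"] by (simp add: divide_simps ; simp add: algebra_simps)
  finally show ?thesis .
qed

lemma TT_Suc: "TT (Suc q) = TT q + cc (2*q+2) / (6*real q+9)"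
proof -
  have "TT (Suc q) = TT q + real ((4 * Suc q) choose (2 * Suc q)) / ((6 * real (Suc q) + 3) * 16 ^ (Suc q))"
    unfolding TT_def by (rule sum.atLeast0_atMost_Suc)
  also have "(16::real) ^ (Suc q) = 16*4^q*4^q" by (simp add: power_mult_distrib[symmetric])
  finally show ?thesis unfolding c1 by (simp add: divide_simps ; simp add: algebra_simps)
qed

lemma cc4: "cc (2*q+4) = cc (2*q+2) * (4*real q+5)*(4*real q+7)/((4*real q+6)*(4*real q+8))"
proof -
  have "cc (2*q+4) = cc ((2*q+2)+1+1)" by (simp add: numeral_eq_Suc)
  also have "\<dots> = cc (2*q+2) * (2*real (2*q+2)+1) / (2*real (2*q+2)+2) * (2*real (2*q+2+1)+1) / (2*real (2*q+2+1)+2)"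
    by (simp only: cc_rec)
  also have "\<dots> = cc (2*q+2) * (4*real q+5)*(4*real q+7)/((4*real q+6)*(4*real q+8))"
    by (simp add: divide_simps ; simp add: algebra_simps)
  finally show ?thesis .
qed

lemma step_alg:
  fixes y Z W p T s :: real
  assumes "y \<ge> 0" "Z > 0" "W > 0" "p > 0"
  shows "1/((2*(y+1)+1)*(Z*(2*y+1)/(2*y+2))*(4*p)) - 6/(16*(4*p)*((y+1)+1)*(W*(4*y+5)*(4*y+7)/((4*y+6)*(4*y+8))))*(4/3 - s*(T + W/(6*y+9)))
   = ((1/((2*y+1)*Z*p) - 6/(16*p*(y+1)*W)*(4/3 - s*T)) - (-(s/2)/(4*p*(y+1)*(2*y+3))
       - (-(1/2)/(4*p*(2*y+3)*(Z*(2*y+1)/(2*y+2)))/((y+1)*(2*y+3))))) / ((4*y+7)*(4*y+5)/((2*y+2)*(2*y+3)))"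
  using assms by (simp add: divide_simps ; simp add: algebra_simps)

lemma main_sums: "(\<lambda>m. A (Suc q) (m+1)) sums Rr (Suc q)"
proof (induction q)
  case 0
  have h2: "cc (2*0+2) = 3/8" using cc_Suc[of 1] cc1 by (simp add: numeral_2_eq_2)
  have ht: "TT 0 = 1/3" unfolding TT_def by simp
  have "Rr (Suc 0) = sqrt 2 / 3 - 1/3"
    unfolding R_form[of 0] h2 ht cc0 by simp
  then show ?case using base_sums by simp
next
  case (Suc q)
  have f1: "2*real (Suc q)+1 = 2*(real q+1)+1" by simp
  have f2: "cc (Suc q) = cc q*(2*real q+1)/(2*real q+2)" by (rule cc_Suc)
  have f3: "(4::real)^(Suc q) = 4*4^q" by simp
  have f4: "real (Suc q)+1 = (real q+1)+1" by simp
  have f5: "cc (2*Suc q+2) = cc (2*q+2)*(4*real q+5)*(4*real q+7)/((4*real q+6)*(4*real q+8))"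
    using cc4[of q] by (simp add: numeral_eq_Suc)
  have f6: "TT (Suc q) = TT q + cc (2*q+2)/(6*real q+9)" by (rule TT_Suc)
  have a1: "A (Suc q) (Suc 0) = (1/2)/(4*4^q*(2*real q+3)*(cc q*(2*real q+1)/(2*real q+2)))"
  proof -
    have a0: "A (Suc q) (Suc 0) = cc 1 / (4^(Suc q) * (2*real q+3) * cc (Suc q))"
      using A_cc[of q 0] by simp
    show ?thesis unfolding a0 cc1 f2 f3 ..
  qed
  have gq: "G q (Suc 0) = (-(1/2)/(4*4^q*(2*real q+3)*(cc q*(2*real q+1)/(2*real q+2))))/((real q+1)*(2*real q+3))"
    unfolding G_def a1 using cc_pos[of q] by (simp add: divide_simps ; simp add: algebra_simps)
  have key: "Rr (Suc (Suc q)) = (Rr (Suc q) - (- sqrt (1/2) / (4^(Suc q)*(real q+1)*(2*real q+3)) - G q (Suc 0))) / mu q"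
    unfolding R_form[of "Suc q"] f1 f2 f3 f4 f5 f6 R_form[of q] sqrt_half gq mu_def
    by (rule step_alg) (simp_all add: cc_pos)
  show ?case unfolding key by (rule step_sums[OF Suc.IH])
qed

theorem theorem4p0p2:
  fixes r :: nat
  assumes "r \<ge> 1"
  shows "(\<lambda>m. let n = m + 1 in
            1 / (real n * (2 * real n + 2 * real r - 1) * 4 ^ n) *
            (real ((4*n - 2) choose (2*n - 1)) / real ((2*n + 2*r - 2) choose (n + r - 1))))
         sums (1 / ((2 * real r - 1) * real ((2*r - 2) choose (r - 1))) - 1 / 2 ^ (2*r - 2) * I_r r)"
proof -
  obtain q where r: "r = Suc q" using assms by (cases r) auto
  have "(\<lambda>m. A r (m+1)) sums Rr r" using main_sums[of q] r by simp
  then show ?thesis unfolding A_def Rr_def Let_def .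
qed

end
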